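(* Let $G$ be a connected, locally finite graph satisfying the Distinct Spheres Condition with respect to a vertex $u$. Then only finitely many vertices in the orbit of $u$ under the automorphism group $\mathrm{Aut}(G)$ are $\sim$-equivalent to $u$.
   Context: All graphs are simple with vertex set $V$; $d$ is graph distance, $B_x(r)=\{y: d(x,y)\le r\}$, $S_x(r)=\{y: d(x,y)=r\}$. $G$ satisfies the Distinct Spheres Condition with respect to $u$ if for all distinct vertices $x,y$ with $d(u,x)=d(u,y)$, $S_x(n)\ne S_y(n)$ for infinitely many $n\in\mathbb{N}$. The relation $\sim$ on $V$: $x\sim y$ iff there exists $n\in\mathbb{N}$ with $B_x(n)=B_y(n)$. *)

theory Defs
  imports Main
begin

text \<open>Simple graph on vertex type 'a (vertex set V = UNIV) given by an edge relation E.\<close>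

definition simple_graph :: "('a \<Rightarrow> 'a \<Rightarrow> bool) \<Rightarrow> bool" where
  "simple_graph E \<longleftrightarrow> (\<forall>x y. E x y \<longrightarrow> E y x) \<and> (\<forall>x. \<not> E x x)"

definition connected_graph :: "('a \<Rightarrow> 'a \<Rightarrow> bool) \<Rightarrow> bool" where
  "connected_graph E \<longleftrightarrow> (\<forall>x y. E\<^sup>*\<^sup>* x y)"

definition locally_finite :: "('a \<Rightarrow> 'a \<Rightarrow> bool) \<Rightarrow> bool" where
  "locally_finite E \<longleftrightarrow> (\<forall>x. finite {y. E x y})"

definition gdist :: "('a \<Rightarrow> 'a \<Rightarrow> bool) \<Rightarrow> 'a \<Rightarrow> 'a \<Rightarrow> nat" where
  "gdist E x y = (LEAST n. (E ^^ n) x y)"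

definition ball :: "('a \<Rightarrow> 'a \<Rightarrow> bool) \<Rightarrow> 'a \<Rightarrow> nat \<Rightarrow> 'a set" where
  "ball E x r = {y. gdist E x y \<le> r}"

definition sphere :: "('a \<Rightarrow> 'a \<Rightarrow> bool) \<Rightarrow> 'a \<Rightarrow> nat \<Rightarrow> 'a set" where
  "sphere E x r = {y. gdist E x y = r}"

definition distinct_spheres :: "('a \<Rightarrow> 'a \<Rightarrow> bool) \<Rightarrow> 'a \<Rightarrow> bool" where
  "distinct_spheres E u \<longleftrightarrow>
     (\<forall>x y. x \<noteq> y \<and> gdist E u x = gdist E u y \<longrightarrow>
        infinite {n::nat. sphere E x n \<noteq> sphere E y n})"

definition ball_equiv :: "('a \<Rightarrow> 'a \<Rightarrow> bool) \<Rightarrow> 'a \<Rightarrow> 'a \<Rightarrow> bool" where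
  "ball_equiv E x y \<longleftrightarrow> (\<exists>n::nat. ball E x n = ball E y n)"

definition automorphism :: "('a \<Rightarrow> 'a \<Rightarrow> bool) \<Rightarrow> ('a \<Rightarrow> 'a) \<Rightarrow> bool" where
  "automorphism E f \<longleftrightarrow> bij f \<and> (\<forall>x y. E x y \<longleftrightarrow> E (f x) (f y))"

definition aut_orbit :: "('a \<Rightarrow> 'a \<Rightarrow> bool) \<Rightarrow> 'a \<Rightarrow> 'a set" where
  "aut_orbit E u = {f u | f. automorphism E f}"

end

theory Submission
  imports Defs
begin

lemma pow_sym:
  assumes "\<forall>x y. E x y \<longrightarrow> E y x"
  shows "(E ^^ n) x y \<Longrightarrow> (E ^^ n) y x"
proof (induction n arbitrary: x y)
  case 0 then show ?case by simp
next
  case (Suc n)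
  from Suc.prems obtain w where "(E ^^ n) x w" "E w y" by (rule relpowp_Suc_E)
  then show ?case using Suc.IH assms by (meson relpowp_Suc_I2)
qed

lemma gdist_le:
  assumes "connected_graph E"
  shows "gdist E x z \<le> m \<longleftrightarrow> (\<exists>k\<le>m. (E ^^ k) x z)"
proof
  obtain n where n: "(E ^^ n) x z" using assms rtranclp_power unfolding connected_graph_def by metis
  assume "gdist E x z \<le> m"
  moreover have "(E ^^ gdist E x z) x z" unfolding gdist_def using n by (rule LeastI)
  ultimately show "\<exists>k\<le>m. (E ^^ k) x z" by blast
next
  assume "\<exists>k\<le>m. (E ^^ k) x z"
  then obtain k where "k \<le> m" "(E ^^ k) x z" by blast
  then show "gdist E x z \<le> m" unfolding gdist_def by (meson Least_le order_trans)
qed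

lemma gdist_sym:
  assumes "connected_graph E" "simple_graph E"
  shows "gdist E x y = gdist E y x"
proof -
  have s: "\<forall>x y. E x y \<longrightarrow> E y x" using assms(2) unfolding simple_graph_def by blast
  have "\<And>m. gdist E x y \<le> m \<longleftrightarrow> gdist E y x \<le> m"
    using gdist_le[OF assms(1)] pow_sym[OF s] by metis
  then show ?thesis by (meson le_antisym order_refl)
qed

lemma ball_Suc:
  assumes "connected_graph E"
  shows "ball E x (Suc m) = ball E x m \<union> {z. \<exists>w\<in>ball E x m. E w z}"
proof -
  have "(\<exists>k\<le>Suc m. (E ^^ k) x z) \<longleftrightarrow> (\<exists>k\<le>m. (E ^^ k) x z) \<or> (\<exists>w. (\<exists>k\<le>m. (E ^^ k) x w) \<and> E w z)" for z
  proof
    assume "\<exists>k\<le>Suc m. (E ^^ k) x z"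
    then obtain k where k: "k \<le> Suc m" "(E ^^ k) x z" by blast
    show "(\<exists>k\<le>m. (E ^^ k) x z) \<or> (\<exists>w. (\<exists>k\<le>m. (E ^^ k) x w) \<and> E w z)"
    proof (cases k)
      case 0 then show ?thesis using k by auto
    next
      case (Suc j)
      with k obtain w where "(E ^^ j) x w" "E w z" by (meson relpowp_Suc_E)
      then show ?thesis using k Suc by auto
    qed
  next
    assume "(\<exists>k\<le>m. (E ^^ k) x z) \<or> (\<exists>w. (\<exists>k\<le>m. (E ^^ k) x w) \<and> E w z)"
    then show "\<exists>k\<le>Suc m. (E ^^ k) x z"
      by (meson le_SucI relpowp_Suc_I Suc_le_mono)
  qed
  then show ?thesis unfolding ball_def using gdist_le[OF assms] by auto
qed

lemma ball_mono_eq: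
  assumes "connected_graph E" "ball E x n = ball E y n" "n \<le> m"
  shows "ball E x m = ball E y m"
  using assms(3)
proof (induction m rule: dec_induct)
  case base then show ?case using assms(2) .
next
  case (step m) then show ?case using ball_Suc[OF assms(1)] by simp
qed

lemma sphere_ball:
  assumes "m \<ge> 1"
  shows "sphere E x m = ball E x m - ball E x (m - 1)"
  using assms unfolding sphere_def ball_def by auto

lemma spheres_finite:
  assumes "connected_graph E" "ball E x n = ball E y n"
  shows "finite {m. sphere E x m \<noteq> sphere E y m}"
proof -
  have "{m. sphere E x m \<noteq> sphere E y m} \<subseteq> {..n}"
  proof
    fix m assume "m \<in> {m. sphere E x m \<noteq> sphere E y m}"
    show "m \<in> {..n}"
    proof (rule ccontr)
      assume "m \<notin> {..n}"
      then have "m \<ge> 1" "n \<le> m" "n \<le> m - 1" by auto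
      then have "sphere E x m = sphere E y m"
        using sphere_ball ball_mono_eq[OF assms] by metis
      then show False using \<open>m \<in> _\<close> by simp
    qed
  qed
  then show ?thesis using finite_subset by blast
qed

lemma pow_aut:
  assumes "automorphism E g"
  shows "(E ^^ n) (g x) (g y) \<longleftrightarrow> (E ^^ n) x y"
proof (induction n arbitrary: y)
  case 0
  have "inj g" using assms unfolding automorphism_def bij_def by blast
  then show ?case by (simp add: inj_eq)
next
  case (Suc n)
  have e: "\<And>a b. E a b \<longleftrightarrow> E (g a) (g b)" and sj: "surj g"
    using assms unfolding automorphism_def bij_def by auto
  show ?case
  proof
    assume "(E ^^ Suc n) (g x) (g y)"
    then obtain w where w: "(E ^^ n) (g x) w" "E w (g y)" by (rule relpowp_Suc_E)
    obtain w' where "w = g w'" using sj by (metis surjD)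
    then show "(E ^^ Suc n) x y" using w Suc.IH e by (metis relpowp_Suc_I)
  next
    assume "(E ^^ Suc n) x y"
    then obtain w where w: "(E ^^ n) x w" "E w y" by (rule relpowp_Suc_E)
    then show "(E ^^ Suc n) (g x) (g y)" using Suc.IH e by (metis relpowp_Suc_I)
  qed
qed

lemma gdist_aut:
  assumes "automorphism E g"
  shows "gdist E (g x) (g y) = gdist E x y"
  unfolding gdist_def using pow_aut[OF assms] by simp

lemma ball_aut:
  assumes "automorphism E g"
  shows "ball E (g x) n = g ` ball E x n"
proof -
  have sj: "surj g" using assms unfolding automorphism_def bij_def by auto
  show ?thesis
  proof
    show "ball E (g x) n \<subseteq> g ` ball E x n"
    proof
      fix z assume z: "z \<in> ball E (g x) n"
      obtain z' where "z = g z'" using sj by (metis surjD)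
      then show "z \<in> g ` ball E x n" using z gdist_aut[OF assms] unfolding ball_def by auto
    qed
  next
    show "g ` ball E x n \<subseteq> ball E (g x) n"
      using gdist_aut[OF assms] unfolding ball_def by auto
  qed
qed

lemma sphere_aut:
  assumes "automorphism E g"
  shows "sphere E (g x) n = g ` sphere E x n"
proof -
  have sj: "surj g" using assms unfolding automorphism_def bij_def by auto
  show ?thesis
  proof
    show "sphere E (g x) n \<subseteq> g ` sphere E x n"
    proof
      fix z assume z: "z \<in> sphere E (g x) n"
      obtain z' where "z = g z'" using sj by (metis surjD)
      then show "z \<in> g ` sphere E x n" using z gdist_aut[OF assms] unfolding sphere_def by auto
    qed
  next
    show "g ` sphere E x n \<subseteq> sphere E (g x) n"
      using gdist_aut[OF assms] unfolding sphere_def by auto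
  qed
qed

lemma dsc_aut:
  assumes "automorphism E g" "distinct_spheres E u" "connected_graph E"
    and "x \<noteq> y" "gdist E (g u) x = gdist E (g u) y" "ball E x n = ball E y n"
  shows False
proof -
  have bj: "bij g" using assms(1) unfolding automorphism_def by auto
  have inj: "inj g" using bj bij_def by blast
  define x' where "x' = inv g x"
  define y' where "y' = inv g y"
  have gx: "g x' = x" and gy: "g y' = y" unfolding x'_def y'_def using bj
    by (simp_all add: bij_is_surj surj_f_inv_f)
  have "x' \<noteq> y'" using gx gy assms(4) by auto
  moreover have "gdist E u x' = gdist E u y'"
    using gdist_aut[OF assms(1), of u x'] gdist_aut[OF assms(1), of u y'] gx gy assms(5) by simp
  ultimately have inf: "infinite {m. sphere E x' m \<noteq> sphere E y' m}"
    using assms(2) unfolding distinct_spheres_def by blast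
  have "g ` ball E x' n = g ` ball E y' n"
    using ball_aut[OF assms(1)] gx gy assms(6) by metis
  then have "ball E x' n = ball E y' n" using inj by (simp add: inj_image_eq_iff)
  then show False using spheres_finite[OF assms(3)] inf by blast
qed

theorem mainTheorem6:
  fixes E :: "'a \<Rightarrow> 'a \<Rightarrow> bool" and u :: 'a
  assumes "simple_graph E" and "connected_graph E" and "locally_finite E"
    and "distinct_spheres E u"
  shows "finite {v \<in> aut_orbit E u. ball_equiv E v u}"
proof (rule ccontr)
  define C where "C = {v \<in> aut_orbit E u. ball_equiv E v u}"
  assume "infinite {v \<in> aut_orbit E u. ball_equiv E v u}"
  then have infC: "infinite C" unfolding C_def .
  have idaut: "automorphism E id" unfolding automorphism_def by simp
  have injC: "inj_on (gdist E u) C"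
  proof (rule inj_onI)
    fix x y assume x: "x \<in> C" and y: "y \<in> C" and d: "gdist E u x = gdist E u y"
    show "x = y"
    proof (rule ccontr)
      assume ne: "x \<noteq> y"
      obtain a where a: "ball E x a = ball E u a" using x unfolding C_def ball_equiv_def by auto
      obtain b where b: "ball E y b = ball E u b" using y unfolding C_def ball_equiv_def by auto
      have "ball E x (max a b) = ball E u (max a b)" using ball_mono_eq[OF assms(2) a] by simp
      moreover have "ball E y (max a b) = ball E u (max a b)" using ball_mono_eq[OF assms(2) b] by simp
      ultimately have "ball E x (max a b) = ball E y (max a b)" by simp
      then show False using dsc_aut[OF idaut assms(4) assms(2) ne] d by simp
    qed
  qed
  have "\<exists>v\<in>C. v \<noteq> u"
  proof (rule ccontr)
    assume "\<not> (\<exists>v\<in>C. v \<noteq> u)"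
    then have "C \<subseteq> {u}" by auto
    then have "finite C" by (rule finite_subset) simp
    then show False using infC by simp
  qed
  then obtain v where vC: "v \<in> C" and vu: "v \<noteq> u" by blast
  obtain N where N: "ball E v N = ball E u N" using vC unfolding C_def ball_equiv_def by auto
  have "finite (C \<inter> {z. gdist E u z \<le> N})"
  proof -
    have "inj_on (gdist E u) (C \<inter> {z. gdist E u z \<le> N})" using injC by (rule inj_on_subset) auto
    moreover have "gdist E u ` (C \<inter> {z. gdist E u z \<le> N}) \<subseteq> {..N}" by auto
    ultimately show ?thesis by (meson finite_atMost finite_imageD finite_subset)
  qed
  have "\<exists>c\<in>C. gdist E u c > N"
  proof (rule ccontr)
    assume "\<not> (\<exists>c\<in>C. gdist E u c > N)"
    then have "C \<subseteq> C \<inter> {z. gdist E u z \<le> N}" by (auto simp: not_less)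
    then have "finite C" using \<open>finite (C \<inter> _)\<close> by (rule finite_subset)
    then show False using infC by simp
  qed
  then obtain c where cC: "c \<in> C" and cN: "gdist E u c > N" by blast
  obtain g where g: "automorphism E g" "c = g u" using cC unfolding C_def aut_orbit_def by auto
  define m where "m = gdist E u c"
  have "c \<in> ball E u m" unfolding ball_def m_def by simp
  then have "c \<in> ball E v m" using ball_mono_eq[OF assms(2) N, of m] cN m_def by simp
  then have le: "gdist E v c \<le> m" unfolding ball_def by simp
  have "c \<notin> ball E u (m - 1)" unfolding ball_def m_def using cN by auto
  then have "c \<notin> ball E v (m - 1)" using ball_mono_eq[OF assms(2) N, of "m - 1"] cN m_def by simp
  then have "gdist E v c > m - 1" unfolding ball_def by simp
  with le cN m_def have "gdist E v c = gdist E u c" by linarith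
  then have "gdist E c v = gdist E c u" using gdist_sym[OF assms(2) assms(1)] by metis
  then show False using dsc_aut[OF g(1) assms(4) assms(2) vu, of N] g(2) N by simp
qed

end
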